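(* Let $f$ be as in the standing setting. For $x\in X$ let $x^+=[x-\frac{1}{L_f}\nabla f(x)]_X$ and $\bar x^+=[x^+]_{X^*}$. Suppose there is a constant $\beta$ with $0<\beta<1$ such that $$\|x^+-\bar x^+\|\le\beta\|x-\bar x\|\qquad\forall x\in X.$$ Then $f$ satisfies the quadratic functional growth condition $f(x)-f^*\ge\frac{\kappa_f}{2}\|x-\bar x\|^2$ for all $x\in X$ with $\kappa_f=L_f(1-\beta)^2$.
   Context: Standing setting: $X\subseteq\mathbb{R}^n$ is a nonempty closed convex set; $f:X\to\mathbb{R}$ is convex and continuously differentiable, with $L_f$-Lipschitz continuous gradient on $X$ ($L_f>0$). Consider $f^*=\min_{x\in X}f(x)$ with optimal set $X^*$ nonempty and closed and $f^*$ finite. $\|\cdot\|$ is the Euclidean norm, $[u]_S$ is the Euclidean projection onto a closed convex set $S$, and $\bar x=[x]_{X^*}$. *)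

theory Defs
  imports "HOL-Analysis.Analysis"
begin

text \<open>Euclidean projection onto a closed convex set S is the library's closest_point S.
  Optimal value and optimal set of min over X of f.\<close>

definition opt_val :: "('a \<Rightarrow> real) \<Rightarrow> 'a set \<Rightarrow> real" where
  "opt_val f X = (INF x\<in>X. f x)"

definition opt_set :: "('a \<Rightarrow> real) \<Rightarrow> 'a set \<Rightarrow> 'a set" where
  "opt_set f X = {x \<in> X. f x = opt_val f X}"

end

theory Submission
  imports Defs
begin

lemma descent:
  fixes f :: "'a::euclidean_space \<Rightarrow> real" and g :: "'a \<Rightarrow> 'a"
  assumes cX: "convex X" and x: "x \<in> X" and y: "y \<in> X"
    and f_grad: "\<And>x. x \<in> X \<Longrightarrow> (f has_derivative (\<lambda>h. g x \<bullet> h)) (at x within X)"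
    and g_lip: "\<And>x y. x \<in> X \<Longrightarrow> y \<in> X \<Longrightarrow> norm (g x - g y) \<le> L * norm (x - y)"
  shows "f y \<le> f x + g x \<bullet> (y - x) + L / 2 * (norm (y - x))\<^sup>2"
proof -
  define u where "u = y - x"
  define p where "p = (\<lambda>t::real. x + t *\<^sub>R u)"
  have pX: "p t \<in> X" if "t \<in> {0..1}" for t
  proof -
    have "p t = (1 - t) *\<^sub>R x + t *\<^sub>R y" by (simp add: p_def u_def algebra_simps)
    then show ?thesis using that cX x y by (auto simp: convex_alt)
  qed
  define \<psi> where "\<psi> = (\<lambda>t. f (p t) - t * (g x \<bullet> u) - t\<^sup>2 * (L/2 * (norm u)\<^sup>2))"
  have dp: "(p has_derivative (\<lambda>h. h *\<^sub>R u)) (at t within {0..1})" for t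
    unfolding p_def by (auto intro!: derivative_eq_intros)
  have d: "(\<psi> has_derivative (\<lambda>h. h * (g (p t) \<bullet> u) - h * (g x \<bullet> u) - h * (2 * t * (L/2 * (norm u)\<^sup>2)))) (at t within {0..1})"
    if "0 \<le> t" "t \<le> 1" for t
  proof -
    have "(f has_derivative (\<lambda>h. g (p t) \<bullet> h)) (at (p t) within p ` {0..1})"
    proof (rule has_derivative_subset)
      show "(f has_derivative (\<lambda>h. g (p t) \<bullet> h)) (at (p t) within X)" using f_grad pX that by auto
      show "p ` {0..1} \<subseteq> X" using pX by auto
    qed
    from diff_chain_within[OF dp this]
    have "((f \<circ> p) has_derivative (\<lambda>h. g (p t) \<bullet> (h *\<^sub>R u))) (at t within {0..1})"
      by (simp add: o_def)
    then have "((\<lambda>t. f (p t)) has_derivative (\<lambda>h. h * (g (p t) \<bullet> u))) (at t within {0..1})"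
      by (simp add: o_def)
    then show ?thesis unfolding \<psi>_def
      by (auto intro!: derivative_eq_intros simp: power2_eq_square algebra_simps)
  qed
  obtain t where t: "t \<in> {0<..<1}" and eq: "\<psi> 1 - \<psi> 0 = 1 * (g (p t) \<bullet> u) - 1 * (g x \<bullet> u) - 1 * (2 * t * (L/2 * (norm u)\<^sup>2))"
    using mvt_simple[of 0 1 \<psi>, OF _ d] by auto
  have "(g (p t) - g x) \<bullet> u \<le> norm (g (p t) - g x) * norm u" by (rule norm_cauchy_schwarz)
  also have "\<dots> \<le> L * norm (p t - x) * norm u"
    using g_lip[of "p t" x] pX[of t] t x by (auto intro: mult_right_mono)
  also have "\<dots> = L * t * (norm u)\<^sup>2" using t by (simp add: p_def power2_eq_square)
  finally have "\<psi> 1 - \<psi> 0 \<le> 0" using eq by (simp add: inner_diff_left algebra_simps)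
  then show ?thesis by (simp add: \<psi>_def p_def u_def)
qed

theorem theorem5:
  fixes f :: "real ^ 'n \<Rightarrow> real" and g :: "real ^ 'n \<Rightarrow> real ^ 'n"
    and X :: "(real ^ 'n) set" and L \<beta> :: real
  assumes X_ne: "X \<noteq> {}" and X_closed: "closed X" and X_convex: "convex X"
    and f_convex: "convex_on X f"
    and f_grad: "\<And>x. x \<in> X \<Longrightarrow> (f has_derivative (\<lambda>h. g x \<bullet> h)) (at x within X)"
    and g_cont: "continuous_on X g"
    and L_pos: "L > 0"
    and g_lip: "\<And>x y. x \<in> X \<Longrightarrow> y \<in> X \<Longrightarrow> norm (g x - g y) \<le> L * norm (x - y)"
    and bdd: "bdd_below (f ` X)"
    and opt_ne: "opt_set f X \<noteq> {}"
    and opt_closed: "closed (opt_set f X)"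
    and \<beta>_pos: "0 < \<beta>" and \<beta>_lt1: "\<beta> < 1"
    and EB: "\<And>x. x \<in> X \<Longrightarrow>
      (let xp = closest_point X (x - (1 / L) *\<^sub>R g x)
       in norm (xp - closest_point (opt_set f X) xp)
          \<le> \<beta> * norm (x - closest_point (opt_set f X) x))"
  shows "\<forall>x\<in>X. f x - opt_val f X
           \<ge> (L * (1 - \<beta>)\<^sup>2) / 2 * (norm (x - closest_point (opt_set f X) x))\<^sup>2"
  proof
  fix x assume xX: "x \<in> X"
  define S where "S = opt_set f X"
  define xp where "xp = closest_point X (x - (1 / L) *\<^sub>R g x)"
  have xpX: "xp \<in> X" unfolding xp_def using closest_point_in_set X_closed X_ne by blast
  have eb: "norm (xp - closest_point S xp) \<le> \<beta> * norm (x - closest_point S x)"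
    using EB[OF xX] by (simp add: xp_def S_def Let_def)
  have cS: "closest_point S xp \<in> S" using closest_point_in_set opt_closed opt_ne S_def by blast
  have "dist x (closest_point S x) \<le> dist x (closest_point S xp)"
    using closest_point_le opt_closed cS S_def by blast
  then have "norm (x - closest_point S x) \<le> norm (x - closest_point S xp)" by (simp add: dist_norm)
  also have "\<dots> \<le> norm (x - xp) + norm (xp - closest_point S xp)"
    using norm_triangle_ineq[of "x - xp" "xp - closest_point S xp"] by simp
  finally have A: "(1 - \<beta>) * norm (x - closest_point S x) \<le> norm (x - xp)"
    using eb by (simp add: algebra_simps)
  have "inner ((x - (1 / L) *\<^sub>R g x) - xp) (x - xp) \<le> 0"
    unfolding xp_def by (rule closest_point_dot[OF X_convex X_closed xX])
  then have "(norm (x - xp))\<^sup>2 \<le> (1/L) * (g x \<bullet> (x - xp))"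
    by (simp add: inner_diff_left power2_norm_eq_inner algebra_simps)
  then have B: "L * (norm (x - xp))\<^sup>2 \<le> g x \<bullet> (x - xp)"
    using L_pos by (simp add: field_simps)
  have C: "f xp \<le> f x + g x \<bullet> (xp - x) + L / 2 * (norm (xp - x))\<^sup>2"
    by (rule descent[OF X_convex xX xpX f_grad g_lip])
  have "g x \<bullet> (xp - x) = - (g x \<bullet> (x - xp))" by (simp add: inner_diff_right)
  moreover have "norm (xp - x) = norm (x - xp)" by (simp add: norm_minus_commute)
  ultimately have D: "f x - f xp \<ge> L / 2 * (norm (x - xp))\<^sup>2" using B C by simp
  have E: "opt_val f X \<le> f xp" unfolding opt_val_def using bdd xpX by (auto intro: cINF_lower)
  have "0 \<le> (1 - \<beta>) * norm (x - closest_point S x)" using \<beta>_lt1 by simp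
  then have "((1 - \<beta>) * norm (x - closest_point S x))\<^sup>2 \<le> (norm (x - xp))\<^sup>2"
    using A power_mono by blast
  then have "L / 2 * ((1 - \<beta>) * norm (x - closest_point S x))\<^sup>2 \<le> L / 2 * (norm (x - xp))\<^sup>2"
    using L_pos by (intro mult_left_mono) auto
  then show "f x - opt_val f X \<ge> (L * (1 - \<beta>)\<^sup>2) / 2 * (norm (x - closest_point (opt_set f X) x))\<^sup>2"
    using D E by (simp add: S_def power_mult_distrib)
qed

end
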